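(* Let $X_1,X_2,\ldots$ be i.i.d. random variables with $a=\mathsf{E}X_1\neq 0$ and finite variance $\sigma^2=\mathsf{D}X_1$. Let $\lambda>0$ and let $N(\lambda)$ be a random variable with the Poisson distribution with parameter $\lambda$, independent of $X_1,X_2,\ldots$ (the empty sum $\sum_{j=1}^0$ is defined to be $0$). Let $1\le s\le 2$ and write $s=m+\alpha$ with $m$ a nonnegative integer and $0<\alpha\le 1$. Then $$ \zeta_s\bigg(\frac{1}{a\lambda}\sum_{j=1}^{N(\lambda)}X_j,\;1\bigg)\le\frac{\Gamma(1+\alpha)}{\Gamma(1+s)}\Big(\frac{a^2+\sigma^2}{\lambda a^2}\Big)^{s/2}. $$
   Context: For $s>0$ write uniquely $s=m+\alpha$ with $m$ a nonnegative integer and $0<\alpha\le 1$. $\mathcal{F}_s$ denotes the set of all real-valued bounded functions $f$ on $\mathbb{R}$ that are $m$ times differentiable and satisfy $|f^{(m)}(x)-f^{(m)}(y)|\le|x-y|^{\alpha}$ for all $x,y$. The Zolotarev metric is $\zeta_s(X,Y)=\sup\{|\mathsf{E}(f(X)-f(Y))|: f\in\mathcal{F}_s\}$; here the second argument $1$ denotes the random variable identically equal to $1$. *)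

theory Defs
  imports "HOL-Probability.Probability"
begin

text \<open>Decomposition s = m + alpha with m a nonnegative integer and 0 < alpha \<le> 1.\<close>
definition zol_m :: "real \<Rightarrow> nat" where
  "zol_m s = nat (\<lceil>s\<rceil> - 1)"

definition zol_alpha :: "real \<Rightarrow> real" where
  "zol_alpha s = s - real (zol_m s)"

definition zol_class :: "real \<Rightarrow> (real \<Rightarrow> real) set" where
  "zol_class s = {f. bounded (range f) \<and>
      (\<forall>k < zol_m s. \<forall>x. ((deriv ^^ k) f) differentiable (at x)) \<and>
      (\<forall>x y. \<bar>(deriv ^^ zol_m s) f x - (deriv ^^ zol_m s) f y\<bar> \<le> \<bar>x - y\<bar> powr zol_alpha s)}"

text \<open>Zolotarev metric between two real random variables on the same probability
  space M (values in the extended reals, so that an unbounded supremum is +\<infinity>).\<close>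
definition zolotarev :: "real \<Rightarrow> 'a measure \<Rightarrow> ('a \<Rightarrow> real) \<Rightarrow> ('a \<Rightarrow> real) \<Rightarrow> ereal" where
  "zolotarev s M X Y = (SUP f \<in> zol_class s.
      ereal \<bar>(\<integral>\<omega>. f (X \<omega>) \<partial>M) - (\<integral>\<omega>. f (Y \<omega>) \<partial>M)\<bar>)"

end

theory Submission
  imports Defs
begin


lemma taylor_one_side:
  fixes f :: "real \<Rightarrow> real" and a x y :: real
  assumes dif: "\<And>x. f differentiable (at x)"
    and hol: "\<And>x y. \<bar>deriv f x - deriv f y\<bar> \<le> \<bar>x - y\<bar> powr a"
    and a: "0 < a" and yx: "y < x" and c: "\<bar>c\<bar> = 1"
  shows "c * (f x - f y - deriv f y * (x - y)) \<le> (x - y) powr (1 + a) / (1 + a)"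
proof -
  define \<psi> where "\<psi> t = c * (f t - f y - deriv f y * (t - y)) - (t - y) powr (1 + a) / (1 + a)" for t
  have Df: "\<And>t. DERIV f t :> deriv f t" using dif by (simp add: DERIV_deriv_iff_real_differentiable)
  have contf: "continuous_on {y..x} f"
    by (meson Df DERIV_continuous continuous_at_imp_continuous_on)
  have cont: "continuous_on {y..x} \<psi>"
    unfolding \<psi>_def
    using a by (intro continuous_intros contf continuous_on_powr') auto
  have D\<psi>: "DERIV \<psi> t :> c * (deriv f t - deriv f y) - (t - y) powr a" if "y < t" for t
  proof -
    have "DERIV (\<lambda>t. (t - y) powr (1 + a)) t :> (1 + a) * (t - y) powr a"
      using that by (auto intro!: derivative_eq_intros)
    from DERIV_cdivide[OF this, of "1 + a"]
    have P: "DERIV (\<lambda>t. (t - y) powr (1 + a) / (1 + a)) t :> (t - y) powr a"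
      using a by simp
    show ?thesis unfolding \<psi>_def
      by (rule derivative_eq_intros P Df | simp)+
  qed
  obtain l z where z: "y < z" "z < x" "DERIV \<psi> z :> l" "\<psi> x - \<psi> y = (x - y) * l"
    using MVT[OF yx cont] D\<psi> by (meson real_differentiable_def)
  have l: "l = c * (deriv f z - deriv f y) - (z - y) powr a"
    using DERIV_unique[OF z(3) D\<psi>[OF z(1)]] .
  have "c * (deriv f z - deriv f y) \<le> \<bar>deriv f z - deriv f y\<bar>"
    using c by (cases "c \<ge> 0") (auto simp: abs_if)
  also have "\<dots> \<le> (z - y) powr a" using hol[of z y] z by simp
  finally have "l \<le> 0" using l by simp
  then have "\<psi> x \<le> \<psi> y" using z(4) yx mult_nonneg_nonpos[of "x - y" l] by simp
  moreover have "\<psi> y = 0" unfolding \<psi>_def using a by simp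
  ultimately show ?thesis unfolding \<psi>_def by simp
qed

lemma taylor_holder:
  fixes f :: "real \<Rightarrow> real" and a x y :: real
  assumes dif: "\<And>x. f differentiable (at x)"
    and hol: "\<And>x y. \<bar>deriv f x - deriv f y\<bar> \<le> \<bar>x - y\<bar> powr a"
    and a: "0 < a"
  shows "\<bar>f x - f y - deriv f y * (x - y)\<bar> \<le> \<bar>x - y\<bar> powr (1 + a) / (1 + a)"
proof -
  consider "y < x" | "x = y" | "x < y" by linarith
  then show ?thesis
  proof cases
    case 1
    from taylor_one_side[OF dif hol a 1, of 1] taylor_one_side[OF dif hol a 1, of "-1"] 1
    show ?thesis by (simp add: abs_le_iff)
  next
    case 2 then show ?thesis using a by simp
  next
    case 3
    define g where "g t = f (- t)" for t
    have Df: "\<And>t. DERIV f t :> deriv f t" using dif by (simp add: DERIV_deriv_iff_real_differentiable)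
    have Dg: "DERIV g t :> - deriv f (- t)" for t
      unfolding g_def using DERIV_chain2[OF Df DERIV_minus[OF DERIV_ident]] by simp
    have dg: "deriv g t = - deriv f (- t)" for t using Dg by (rule DERIV_imp_deriv)
    have difg: "\<And>x. g differentiable (at x)" using Dg real_differentiable_def by blast
    have holg: "\<And>x y. \<bar>deriv g x - deriv g y\<bar> \<le> \<bar>x - y\<bar> powr a"
    proof -
      fix u v
      have "\<bar>deriv g u - deriv g v\<bar> = \<bar>deriv f (-u) - deriv f (-v)\<bar>" by (simp add: dg abs_minus_commute)
      also have "\<dots> \<le> \<bar>(-u) - (-v)\<bar> powr a" by (rule hol)
      finally show "\<bar>deriv g u - deriv g v\<bar> \<le> \<bar>u - v\<bar> powr a" by (simp add: abs_minus_commute)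
    qed
    have "- y < - x" using 3 by simp
    from taylor_one_side[OF difg holg a this, of 1] taylor_one_side[OF difg holg a this, of "-1"]
    show ?thesis using 3 by (simp add: abs_le_iff g_def dg algebra_simps)
  qed
qed



lemma abs_le_sq1: "\<bar>t::real\<bar> \<le> t\<^sup>2 + 1"
proof (cases "\<bar>t\<bar> \<le> 1")
  case True then show ?thesis using zero_le_power2[of t] by linarith
next
  case False
  then have "\<bar>t\<bar> * 1 \<le> \<bar>t\<bar> * \<bar>t\<bar>" by (intro mult_left_mono) auto
  then show ?thesis by (simp add: power2_eq_square)
qed

lemma poisson_sums:
  fixes lam :: real
  shows "(\<lambda>k. exp (- lam) * lam ^ k / fact k) sums 1"
    and "(\<lambda>k. real k * (exp (- lam) * lam ^ k / fact k)) sums lam"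
    and "(\<lambda>k. (real k)\<^sup>2 * (exp (- lam) * lam ^ k / fact k)) sums (lam\<^sup>2 + lam)"
proof -
  have e: "(\<lambda>k. lam ^ k / fact k) sums exp lam"
    using exp_converges[of lam] by (simp add: divide_inverse mult.commute)
  have q: "(\<lambda>k. real k * lam ^ k / fact k) sums (lam * exp lam)"
  proof -
    have "(\<lambda>n. real (Suc n) * lam ^ (Suc n) / fact (Suc n)) = (\<lambda>n. lam * (lam ^ n / fact n))"
      by (auto simp: fun_eq_iff field_simps simp del: of_nat_Suc)
    then have "(\<lambda>n. real (Suc n) * lam ^ (Suc n) / fact (Suc n)) sums (lam * exp lam)"
      using sums_mult[OF e, of lam] by simp
    then show ?thesis by (subst (asm) sums_Suc_iff) simp
  qed
  have r: "(\<lambda>k. (real k)\<^sup>2 * lam ^ k / fact k) sums (lam * (lam * exp lam + exp lam))"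
  proof -
    have eq1: "(\<lambda>n. (real (Suc n))\<^sup>2 * lam ^ (Suc n) / fact (Suc n)) = (\<lambda>n. lam * (real (Suc n) * lam ^ n / fact n))"
      by (auto simp: fun_eq_iff field_simps power2_eq_square simp del: of_nat_Suc)
    have eq2: "(\<lambda>n. lam * (real (Suc n) * lam ^ n / fact n)) = (\<lambda>n. lam * (real n * lam ^ n / fact n + lam ^ n / fact n))"
      by (auto simp: fun_eq_iff field_simps)
    have "(\<lambda>n. (real (Suc n))\<^sup>2 * lam ^ (Suc n) / fact (Suc n)) sums (lam * (lam * exp lam + exp lam))"
      unfolding eq1 eq2 by (rule sums_mult[OF sums_add[OF q e]])
    then show ?thesis by (subst (asm) sums_Suc_iff) simp
  qed
  show "(\<lambda>k. exp (- lam) * lam ^ k / fact k) sums 1"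
    using sums_mult[OF e, of "exp (- lam)"] by (simp add: exp_minus field_simps)
  show "(\<lambda>k. real k * (exp (- lam) * lam ^ k / fact k)) sums lam"
    using sums_mult[OF q, of "exp (- lam)"] by (simp add: exp_minus field_simps)
  show "(\<lambda>k. (real k)\<^sup>2 * (exp (- lam) * lam ^ k / fact k)) sums (lam\<^sup>2 + lam)"
  proof -
    have "(\<lambda>k. exp (- lam) * ((real k)\<^sup>2 * lam ^ k / fact k)) sums (exp (- lam) * (lam * (lam * exp lam + exp lam)))"
      by (rule sums_mult[OF r])
    moreover have "exp (- lam) * (lam * (lam * exp lam + exp lam)) = lam\<^sup>2 + lam"
      by (simp add: exp_minus field_simps power2_eq_square)
    moreover have "(\<lambda>k. exp (- lam) * ((real k)\<^sup>2 * lam ^ k / fact k)) = (\<lambda>k. (real k)\<^sup>2 * (exp (- lam) * lam ^ k / fact k))"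
      by (simp add: fun_eq_iff)
    ultimately show ?thesis by simp
  qed
qed

lemma moment_bound:
  fixes M :: "'a measure" and Y :: "'a \<Rightarrow> real" and s :: real
  assumes "prob_space M" and Ym[measurable]: "Y \<in> borel_measurable M"
    and int2: "integrable M (\<lambda>\<omega>. (Y \<omega>)\<^sup>2)"
    and Vpos: "(\<integral>\<omega>. (Y \<omega>)\<^sup>2 \<partial>M) > 0" and s: "0 < s" "s \<le> 2"
  shows "integrable M (\<lambda>\<omega>. \<bar>Y \<omega>\<bar> powr s)"
    and "(\<integral>\<omega>. \<bar>Y \<omega>\<bar> powr s \<partial>M) \<le> (\<integral>\<omega>. (Y \<omega>)\<^sup>2 \<partial>M) powr (s / 2)"
proof -
  interpret prob_space M by fact
  define V where "V = (\<integral>\<omega>. (Y \<omega>)\<^sup>2 \<partial>M)"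
  define p where "p = s / 2"
  have p: "0 < p" "p \<le> 1" using s by (auto simp: p_def)
  have pt: "\<bar>y\<bar> powr s \<le> (p * y\<^sup>2 + (1 - p) * V) / V powr (1 - p)" for y
  proof (cases "y = 0")
    case True then show ?thesis using p Vpos V_def by simp
  next
    case False
    have "(y\<^sup>2) powr p * V powr (1 - p) \<le> p * y\<^sup>2 + (1 - p) * V"
      using Youngs_inequality_0[of p "1 - p" "y\<^sup>2" V] p False Vpos V_def by simp
    moreover have "(y\<^sup>2) powr p = \<bar>y\<bar> powr s"
    proof -
      have "y\<^sup>2 = \<bar>y\<bar> powr 2" using False by (simp add: powr_numeral)
      then have "(y\<^sup>2) powr p = (\<bar>y\<bar> powr 2) powr p" by simp
      also have "\<dots> = \<bar>y\<bar> powr (2 * p)" by (rule powr_powr)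
      also have "\<dots> = \<bar>y\<bar> powr s" by (simp add: p_def)
      finally show ?thesis .
    qed
    ultimately show ?thesis using Vpos V_def by (simp add: field_simps)
  qed
  have intR: "integrable M (\<lambda>\<omega>. (p * (Y \<omega>)\<^sup>2 + (1 - p) * V) / V powr (1 - p))"
    using int2 by auto
  show int: "integrable M (\<lambda>\<omega>. \<bar>Y \<omega>\<bar> powr s)"
  proof (rule Bochner_Integration.integrable_bound[OF intR])
    show "AE \<omega> in M. norm (\<bar>Y \<omega>\<bar> powr s) \<le> norm ((p * (Y \<omega>)\<^sup>2 + (1 - p) * V) / V powr (1 - p))"
    proof (rule AE_I2)
      fix \<omega>
      have "0 \<le> p * (Y \<omega>)\<^sup>2 + (1 - p) * V" using p Vpos V_def by simp
      then show "norm (\<bar>Y \<omega>\<bar> powr s) \<le> norm ((p * (Y \<omega>)\<^sup>2 + (1 - p) * V) / V powr (1 - p))"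
        using pt[of "Y \<omega>"] by simp
    qed
  qed simp
  have "(\<integral>\<omega>. \<bar>Y \<omega>\<bar> powr s \<partial>M) \<le> (\<integral>\<omega>. (p * (Y \<omega>)\<^sup>2 + (1 - p) * V) / V powr (1 - p) \<partial>M)"
    by (rule integral_mono[OF int intR pt])
  also have "\<dots> = (p * V + (1 - p) * V) / V powr (1 - p)"
    using int2 by (simp add: V_def prob_space)
  also have "\<dots> = V powr p"
    using Vpos V_def by (simp add: powr_diff field_simps)
  finally show "(\<integral>\<omega>. \<bar>Y \<omega>\<bar> powr s \<partial>M) \<le> (\<integral>\<omega>. (Y \<omega>)\<^sup>2 \<partial>M) powr (s / 2)"
    by (simp add: V_def p_def)
qed



locale cp = prob_space M for M :: "'a measure" +
  fixes X :: "nat \<Rightarrow> 'a \<Rightarrow> real" and N :: "'a \<Rightarrow> nat" and lam :: real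
  assumes indep: "indep_vars (\<lambda>_. borel) (\<lambda>i. case i of None \<Rightarrow> (\<lambda>\<omega>. real (N \<omega>)) | Some j \<Rightarrow> X j) UNIV"
    and ident: "\<And>i. distr M borel (X i) = distr M borel (X 0)"
    and sq_int: "integrable M (\<lambda>\<omega>. (X 0 \<omega>)\<^sup>2)"
    and poisson: "\<And>k. measure M {\<omega> \<in> space M. N \<omega> = k} = exp (- lam) * lam ^ k / fact k"
begin

definition "Z = (\<lambda>i. case i of None \<Rightarrow> (\<lambda>\<omega>. real (N \<omega>)) | Some j \<Rightarrow> X j)"

lemma indepZ: "indep_vars (\<lambda>_. borel) Z UNIV" using indep by (simp add: Z_def)

lemma rvX[measurable]: "X j \<in> borel_measurable M"
  using indep unfolding indep_vars_def by (metis (no_types, lifting) UNIV_I option.simps(5))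

lemma rvN[measurable]: "(\<lambda>\<omega>. real (N \<omega>)) \<in> borel_measurable M"
  using indep unfolding indep_vars_def by (metis (no_types, lifting) UNIV_I option.simps(4))

lemma same_dist:
  fixes g :: "real \<Rightarrow> real"
  assumes [measurable]: "g \<in> borel_measurable borel"
  shows "integrable M (\<lambda>\<omega>. g (X j \<omega>)) \<longleftrightarrow> integrable M (\<lambda>\<omega>. g (X 0 \<omega>))"
    and "(\<integral>\<omega>. g (X j \<omega>) \<partial>M) = (\<integral>\<omega>. g (X 0 \<omega>) \<partial>M)"
proof -
  show "integrable M (\<lambda>\<omega>. g (X j \<omega>)) \<longleftrightarrow> integrable M (\<lambda>\<omega>. g (X 0 \<omega>))"
    using integrable_distr_eq[of "X j" M borel g] integrable_distr_eq[of "X 0" M borel g] ident[of j]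
    by simp
  show "(\<integral>\<omega>. g (X j \<omega>) \<partial>M) = (\<integral>\<omega>. g (X 0 \<omega>) \<partial>M)"
    using integral_distr[of "X j" M borel g] integral_distr[of "X 0" M borel g] ident[of j]
    by simp
qed

lemma int0: "integrable M (X 0)"
  by (rule square_integrable_imp_integrable[OF rvX sq_int])

lemma intX: "integrable M (X j)" "integrable M (\<lambda>\<omega>. (X j \<omega>)\<^sup>2)"
  "expectation (X j) = expectation (X 0)"
  "expectation (\<lambda>\<omega>. (X j \<omega>)\<^sup>2) = expectation (\<lambda>\<omega>. (X 0 \<omega>)\<^sup>2)"
  using same_dist[of "\<lambda>x. x" j] same_dist[of "\<lambda>x. x\<^sup>2" j] int0 sq_int by auto

lemma prodX:
  assumes "i \<noteq> j"
  shows "integrable M (\<lambda>\<omega>. X i \<omega> * X j \<omega>)"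
    and "expectation (\<lambda>\<omega>. X i \<omega> * X j \<omega>) = (expectation (X 0))\<^sup>2"
proof -
  have iv: "indep_vars (\<lambda>_. borel) Z {Some i, Some j}"
    by (rule indep_vars_subset[OF indepZ]) auto
  have int: "\<And>l. l \<in> {Some i, Some j} \<Longrightarrow> integrable M (Z l)"
    using intX by (auto simp: Z_def)
  have eq: "(\<lambda>\<omega>. \<Prod>l\<in>{Some i, Some j}. Z l \<omega>) = (\<lambda>\<omega>. X i \<omega> * X j \<omega>)"
    using assms by (simp add: Z_def)
  show "integrable M (\<lambda>\<omega>. X i \<omega> * X j \<omega>)"
    using indep_vars_integrable[OF _ iv int] eq by simp
  have "expectation (\<lambda>\<omega>. X i \<omega> * X j \<omega>) = (\<Prod>l\<in>{Some i, Some j}. expectation (Z l))"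
    using indep_vars_lebesgue_integral[OF _ iv int] eq by simp
  also have "\<dots> = (expectation (X 0))\<^sup>2" using assms intX(3)[of i] intX(3)[of j] by (simp add: Z_def power2_eq_square)
  finally show "expectation (\<lambda>\<omega>. X i \<omega> * X j \<omega>) = (expectation (X 0))\<^sup>2" .
qed

lemma sumT:
  "integrable M (\<lambda>\<omega>. \<Sum>j<k. X j \<omega>)"
  "expectation (\<lambda>\<omega>. \<Sum>j<k. X j \<omega>) = real k * expectation (X 0)"
  "integrable M (\<lambda>\<omega>. (\<Sum>j<k. X j \<omega>)\<^sup>2)"
  "expectation (\<lambda>\<omega>. (\<Sum>j<k. X j \<omega>)\<^sup>2) =
     real k * expectation (\<lambda>\<omega>. (X 0 \<omega>)\<^sup>2) + (real k * real k - real k) * (expectation (X 0))\<^sup>2"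
proof -
  show "integrable M (\<lambda>\<omega>. \<Sum>j<k. X j \<omega>)" using intX by auto
  show "expectation (\<lambda>\<omega>. \<Sum>j<k. X j \<omega>) = real k * expectation (X 0)"
    using intX(1) by (simp add: Bochner_Integration.integral_sum sum.cong[OF refl intX(3)])
  have sq: "(\<lambda>\<omega>. (\<Sum>j<k. X j \<omega>)\<^sup>2) = (\<lambda>\<omega>. \<Sum>i<k. \<Sum>j<k. X i \<omega> * X j \<omega>)"
    by (simp add: power2_eq_square sum_product)
  have intij: "integrable M (\<lambda>\<omega>. X i \<omega> * X j \<omega>)" for i j
    using prodX(1)[of i j] intX(2)[of i] by (cases "i = j") (auto simp: power2_eq_square)
  have Eij: "expectation (\<lambda>\<omega>. X i \<omega> * X j \<omega>) =
      (expectation (X 0))\<^sup>2 + (if i = j then expectation (\<lambda>\<omega>. (X 0 \<omega>)\<^sup>2) - (expectation (X 0))\<^sup>2 else 0)" for i j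
    using prodX(2)[of i j] intX(4)[of i] by (cases "i = j") (auto simp: power2_eq_square)
  show "integrable M (\<lambda>\<omega>. (\<Sum>j<k. X j \<omega>)\<^sup>2)" unfolding sq using intij by auto
  have "expectation (\<lambda>\<omega>. (\<Sum>j<k. X j \<omega>)\<^sup>2) = (\<Sum>i<k. \<Sum>j<k. expectation (\<lambda>\<omega>. X i \<omega> * X j \<omega>))"
    unfolding sq using intij
    by (simp add: Bochner_Integration.integral_sum)
  also have "\<dots> = (\<Sum>i<k. \<Sum>j<k. (expectation (X 0))\<^sup>2 + (if i = j then expectation (\<lambda>\<omega>. (X 0 \<omega>)\<^sup>2) - (expectation (X 0))\<^sup>2 else 0))"
    by (simp only: Eij)
  also have "\<dots> = real k * real k * (expectation (X 0))\<^sup>2 + real k * (expectation (\<lambda>\<omega>. (X 0 \<omega>)\<^sup>2) - (expectation (X 0))\<^sup>2)"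
    by (simp add: sum.distrib algebra_simps)
  finally show "expectation (\<lambda>\<omega>. (\<Sum>j<k. X j \<omega>)\<^sup>2) =
     real k * expectation (\<lambda>\<omega>. (X 0 \<omega>)\<^sup>2) + (real k * real k - real k) * (expectation (X 0))\<^sup>2"
    by (simp add: algebra_simps)
qed

lemma Nset[measurable]: "{\<omega> \<in> space M. N \<omega> = k} \<in> sets M"
proof -
  have "{\<omega> \<in> space M. real (N \<omega>) = real k} \<in> sets M" by measurable
  then show ?thesis by simp
qed

lemma cond:
  fixes g :: "real \<Rightarrow> real"
  assumes [measurable]: "g \<in> borel_measurable borel" and int: "integrable M (\<lambda>\<omega>. g (\<Sum>j<k. X j \<omega>))"
  shows "integrable M (\<lambda>\<omega>. indicator {\<omega>. N \<omega> = k} \<omega> * g (\<Sum>j<k. X j \<omega>))"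
    and "(\<integral>\<omega>. indicator {\<omega>. N \<omega> = k} \<omega> * g (\<Sum>j<k. X j \<omega>) \<partial>M)
          = exp (- lam) * lam ^ k / fact k * expectation (\<lambda>\<omega>. g (\<Sum>j<k. X j \<omega>))"
proof -
  have iv: "indep_var (PiM {None} (\<lambda>_. borel)) (\<lambda>\<omega>. restrict (\<lambda>i. Z i \<omega>) {None})
      (PiM (Some ` {..<k}) (\<lambda>_. borel)) (\<lambda>\<omega>. restrict (\<lambda>i. Z i \<omega>) (Some ` {..<k}))"
    by (rule indep_var_restrict[OF indepZ]) auto
  have m1: "(\<lambda>v. indicator {real k} (v None) :: real) \<in> borel_measurable (PiM {None} (\<lambda>_. borel))"
  proof -
    have "(\<lambda>v. v None) \<in> borel_measurable (PiM {None} (\<lambda>_::real option. borel::real measure))"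
      by (rule measurable_component_singleton) simp
    then show ?thesis by measurable
  qed
  have m2: "(\<lambda>v. g (\<Sum>j<k. v (Some j))) \<in> borel_measurable (PiM (Some ` {..<k}) (\<lambda>_. borel))"
  proof -
    have "\<And>j. j < k \<Longrightarrow> (\<lambda>v. v (Some j)) \<in> borel_measurable (PiM (Some ` {..<k}) (\<lambda>_::real option. borel::real measure))"
      by (rule measurable_component_singleton) simp
    then have "(\<lambda>v. \<Sum>j<k. v (Some j)) \<in> borel_measurable (PiM (Some ` {..<k}) (\<lambda>_::real option. borel::real measure))"
      by (intro borel_measurable_sum) auto
    then show ?thesis by measurable
  qed
  note iv2 = indep_var_compose[OF iv m1 m2]
  have e1: "((\<lambda>v. indicator {real k} (v None) :: real) \<circ> (\<lambda>\<omega>. restrict (\<lambda>i. Z i \<omega>) {None}))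
      = (\<lambda>\<omega>. indicator {\<omega>. N \<omega> = k} \<omega>)"
    by (auto simp: fun_eq_iff Z_def indicator_def)
  have e2: "((\<lambda>v. g (\<Sum>j<k. v (Some j))) \<circ> (\<lambda>\<omega>. restrict (\<lambda>i. Z i \<omega>) (Some ` {..<k})))
      = (\<lambda>\<omega>. g (\<Sum>j<k. X j \<omega>))"
    by (simp add: fun_eq_iff Z_def)
  have iv3: "indep_var borel (\<lambda>\<omega>. indicator {\<omega>. N \<omega> = k} \<omega> :: real) borel (\<lambda>\<omega>. g (\<Sum>j<k. X j \<omega>))"
    using iv2 unfolding e1 e2 .
  have ie: "(\<lambda>\<omega>. indicator {\<omega>. N \<omega> = k} \<omega> :: real) \<in> borel_measurable M"
  proof -
    have "(\<lambda>\<omega>. indicator {\<omega> \<in> space M. N \<omega> = k} \<omega> :: real) \<in> borel_measurable M" by measurable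
    then show ?thesis by (rule measurable_cong[THEN iffD1, rotated]) (auto simp: indicator_def)
  qed
  have intI: "integrable M (\<lambda>\<omega>. indicator {\<omega>. N \<omega> = k} \<omega> :: real)"
    by (rule integrable_const_bound[where B=1]) (auto simp: ie indicator_def)
  show "integrable M (\<lambda>\<omega>. indicator {\<omega>. N \<omega> = k} \<omega> * g (\<Sum>j<k. X j \<omega>))"
    by (rule indep_var_integrable[OF iv3 intI int])
  have "(\<integral>\<omega>. indicator {\<omega>. N \<omega> = k} \<omega> \<partial>M) = (\<integral>\<omega>. indicator {\<omega> \<in> space M. N \<omega> = k} \<omega> \<partial>M)"
    by (rule Bochner_Integration.integral_cong) (auto simp: indicator_def)
  also have "\<dots> = measure M {\<omega> \<in> space M. N \<omega> = k}"
    using Nset[of k] by (simp add: emeasure_eq_measure)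
  finally have pI: "(\<integral>\<omega>. indicator {\<omega>. N \<omega> = k} \<omega> \<partial>M) = exp (- lam) * lam ^ k / fact k"
    using poisson by simp
  show "(\<integral>\<omega>. indicator {\<omega>. N \<omega> = k} \<omega> * g (\<Sum>j<k. X j \<omega>) \<partial>M)
          = exp (- lam) * lam ^ k / fact k * expectation (\<lambda>\<omega>. g (\<Sum>j<k. X j \<omega>))"
    using indep_var_lebesgue_integral[OF iv3 intI int] pI by simp
qed

lemma cond_sum:
  fixes g :: "real \<Rightarrow> real"
  assumes [measurable]: "g \<in> borel_measurable borel"
    and int: "\<And>k. integrable M (\<lambda>\<omega>. g (\<Sum>j<k. X j \<omega>))"
    and summ: "summable (\<lambda>k. exp (- lam) * lam ^ k / fact k * expectation (\<lambda>\<omega>. \<bar>g (\<Sum>j<k. X j \<omega>)\<bar>))"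
  shows "integrable M (\<lambda>\<omega>. g (\<Sum>j<N \<omega>. X j \<omega>))"
    and "(\<lambda>k. exp (- lam) * lam ^ k / fact k * expectation (\<lambda>\<omega>. g (\<Sum>j<k. X j \<omega>)))
           sums expectation (\<lambda>\<omega>. g (\<Sum>j<N \<omega>. X j \<omega>))"
proof -
  define f where "f k \<omega> = indicator {\<omega>. N \<omega> = k} \<omega> * g (\<Sum>j<k. X j \<omega>)" for k \<omega>
  have fi: "\<And>k. integrable M (f k)" unfolding f_def by (rule cond(1)[OF _ int]) simp
  have nf: "(\<lambda>\<omega>. norm (f k \<omega>)) = (\<lambda>\<omega>. indicator {\<omega>. N \<omega> = k} \<omega> * \<bar>g (\<Sum>j<k. X j \<omega>)\<bar>)" for k
    by (simp add: fun_eq_iff f_def abs_mult indicator_def)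
  have nfint: "(\<integral>\<omega>. norm (f k \<omega>) \<partial>M) = exp (- lam) * lam ^ k / fact k * expectation (\<lambda>\<omega>. \<bar>g (\<Sum>j<k. X j \<omega>)\<bar>)" for k
    unfolding nf by (rule cond(2)) (auto intro: int)
  have fint: "(\<integral>\<omega>. f k \<omega> \<partial>M) = exp (- lam) * lam ^ k / fact k * expectation (\<lambda>\<omega>. g (\<Sum>j<k. X j \<omega>))" for k
    unfolding f_def by (rule cond(2)) (auto intro: int)
  have fz: "\<And>n \<omega>. n \<notin> {N \<omega>} \<Longrightarrow> f n \<omega> = 0" by (simp add: f_def)
  have AEs: "AE \<omega> in M. summable (\<lambda>i. norm (f i \<omega>))"
  proof (rule AE_I2)
    fix \<omega> show "summable (\<lambda>i. norm (f i \<omega>))"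
      by (rule summable_finite[of "{N \<omega>}"]) (auto simp: fz)
  qed
  have suf: "(\<Sum>i. f i \<omega>) = g (\<Sum>j<N \<omega>. X j \<omega>)" for \<omega>
    using suminf_finite[of "{N \<omega>}" "\<lambda>i. f i \<omega>"] fz by (simp add: f_def)
  have s2: "summable (\<lambda>i. (\<integral>\<omega>. norm (f i \<omega>) \<partial>M))" unfolding nfint by (rule summ)
  show "integrable M (\<lambda>\<omega>. g (\<Sum>j<N \<omega>. X j \<omega>))"
    using integrable_suminf[OF fi AEs s2] unfolding suf .
  show "(\<lambda>k. exp (- lam) * lam ^ k / fact k * expectation (\<lambda>\<omega>. g (\<Sum>j<k. X j \<omega>)))
           sums expectation (\<lambda>\<omega>. g (\<Sum>j<N \<omega>. X j \<omega>))"
    using sums_integral[OF fi AEs s2] unfolding suf fint .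
qed

lemma S_moments:
  assumes anz: "expectation (X 0) \<noteq> 0" and lpos: "lam > 0"
  defines "c \<equiv> 1 / (expectation (X 0) * lam)"
  shows "integrable M (\<lambda>\<omega>. c * (\<Sum>j<N \<omega>. X j \<omega>) - 1)"
    and "expectation (\<lambda>\<omega>. c * (\<Sum>j<N \<omega>. X j \<omega>) - 1) = 0"
    and "integrable M (\<lambda>\<omega>. (c * (\<Sum>j<N \<omega>. X j \<omega>) - 1)\<^sup>2)"
    and "expectation (\<lambda>\<omega>. (c * (\<Sum>j<N \<omega>. X j \<omega>) - 1)\<^sup>2)
           = ((expectation (X 0))\<^sup>2 + variance (X 0)) / (lam * (expectation (X 0))\<^sup>2)"
proof -
  define a where "a = expectation (X 0)"
  define m2 where "m2 = expectation (\<lambda>\<omega>. (X 0 \<omega>)\<^sup>2)"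
  define p where "p k = exp (- lam) * lam ^ k / fact k" for k :: nat
  note ps = poisson_sums[of lam, folded p_def]
  have int1: "integrable M (\<lambda>\<omega>. c * (\<Sum>j<k. X j \<omega>) - 1)" for k
    using sumT(1)[of k] by auto
  have E1: "expectation (\<lambda>\<omega>. c * (\<Sum>j<k. X j \<omega>) - 1) = c * a * real k - 1" for k
    using sumT(1,2)[of k] by (simp add: prob_space a_def)
  have sqe: "(\<lambda>\<omega>. (c * (\<Sum>j<k. X j \<omega>) - 1)\<^sup>2) = (\<lambda>\<omega>. c\<^sup>2 * (\<Sum>j<k. X j \<omega>)\<^sup>2 - 2 * c * (\<Sum>j<k. X j \<omega>) + 1)" for k
    by (simp add: fun_eq_iff power2_eq_square algebra_simps)
  have int2: "integrable M (\<lambda>\<omega>. (c * (\<Sum>j<k. X j \<omega>) - 1)\<^sup>2)" for k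
    unfolding sqe using sumT(1,3)[of k] by auto
  have E2: "expectation (\<lambda>\<omega>. (c * (\<Sum>j<k. X j \<omega>) - 1)\<^sup>2)
      = (c\<^sup>2 * a\<^sup>2) * (real k)\<^sup>2 + (c\<^sup>2 * (m2 - a\<^sup>2) - 2 * c * a) * real k + 1" for k
  proof -
    have "expectation (\<lambda>\<omega>. (c * (\<Sum>j<k. X j \<omega>) - 1)\<^sup>2) = c\<^sup>2 * expectation (\<lambda>\<omega>. (\<Sum>j<k. X j \<omega>)\<^sup>2) - 2 * c * expectation (\<lambda>\<omega>. \<Sum>j<k. X j \<omega>) + 1"
      unfolding sqe using sumT(1,3)[of k] by (simp add: prob_space)
    also have "\<dots> = c\<^sup>2 * (real k * m2 + (real k * real k - real k) * a\<^sup>2) - 2 * c * (real k * a) + 1"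
      by (simp only: sumT(2) sumT(4) a_def m2_def)
    finally show ?thesis by (simp add: algebra_simps power2_eq_square)
  qed
  have sums2: "(\<lambda>k. p k * expectation (\<lambda>\<omega>. (c * (\<Sum>j<k. X j \<omega>) - 1)\<^sup>2))
      sums ((c\<^sup>2 * a\<^sup>2) * (lam\<^sup>2 + lam) + (c\<^sup>2 * (m2 - a\<^sup>2) - 2 * c * a) * lam + 1)"
  proof -
    have "(\<lambda>k. (c\<^sup>2 * a\<^sup>2) * ((real k)\<^sup>2 * p k) + (c\<^sup>2 * (m2 - a\<^sup>2) - 2 * c * a) * (real k * p k) + p k)
      sums ((c\<^sup>2 * a\<^sup>2) * (lam\<^sup>2 + lam) + (c\<^sup>2 * (m2 - a\<^sup>2) - 2 * c * a) * lam + 1)"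
      by (intro sums_add sums_mult ps)
    then show ?thesis unfolding E2 by (simp add: algebra_simps)
  qed
  have sums1: "(\<lambda>k. p k * expectation (\<lambda>\<omega>. c * (\<Sum>j<k. X j \<omega>) - 1)) sums (c * a * lam - 1)"
  proof -
    have "(\<lambda>k. (c * a) * (real k * p k) - p k) sums (c * a * lam - 1)"
      by (intro sums_diff sums_mult ps)
    then show ?thesis unfolding E1 by (simp add: algebra_simps)
  qed
  have abs2: "(\<lambda>\<omega>. \<bar>(c * (\<Sum>j<k. X j \<omega>) - 1)\<^sup>2\<bar>) = (\<lambda>\<omega>. (c * (\<Sum>j<k. X j \<omega>) - 1)\<^sup>2)" for k
    by simp
  have summ2: "summable (\<lambda>k. p k * expectation (\<lambda>\<omega>. \<bar>(c * (\<Sum>j<k. X j \<omega>) - 1)\<^sup>2\<bar>))"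
    unfolding abs2 using sums2 by (rule sums_summable)
  have summ1: "summable (\<lambda>k. p k * expectation (\<lambda>\<omega>. \<bar>c * (\<Sum>j<k. X j \<omega>) - 1\<bar>))"
  proof (rule summable_comparison_test')
    show "summable (\<lambda>k. p k * expectation (\<lambda>\<omega>. (c * (\<Sum>j<k. X j \<omega>) - 1)\<^sup>2) + p k)"
      using sums_add[OF sums2 ps(1)] by (rule sums_summable)
    fix k :: nat
    have pk: "p k \<ge> 0" using lpos by (simp add: p_def)
    have "expectation (\<lambda>\<omega>. \<bar>c * (\<Sum>j<k. X j \<omega>) - 1\<bar>) \<le> expectation (\<lambda>\<omega>. (c * (\<Sum>j<k. X j \<omega>) - 1)\<^sup>2 + 1)"
    proof (rule integral_mono)
      show "integrable M (\<lambda>\<omega>. \<bar>c * (\<Sum>j<k. X j \<omega>) - 1\<bar>)" using int1[of k] by auto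
      show "integrable M (\<lambda>\<omega>. (c * (\<Sum>j<k. X j \<omega>) - 1)\<^sup>2 + 1)" using int2[of k] by auto
      fix \<omega>
      show "\<bar>c * (\<Sum>j<k. X j \<omega>) - 1\<bar> \<le> (c * (\<Sum>j<k. X j \<omega>) - 1)\<^sup>2 + 1"
        by (rule abs_le_sq1)
    qed
    also have "\<dots> = expectation (\<lambda>\<omega>. (c * (\<Sum>j<k. X j \<omega>) - 1)\<^sup>2) + 1"
      using int2[of k] by (simp add: prob_space)
    finally have "expectation (\<lambda>\<omega>. \<bar>c * (\<Sum>j<k. X j \<omega>) - 1\<bar>) \<le> expectation (\<lambda>\<omega>. (c * (\<Sum>j<k. X j \<omega>) - 1)\<^sup>2) + 1" .
    moreover have "expectation (\<lambda>\<omega>. \<bar>c * (\<Sum>j<k. X j \<omega>) - 1\<bar>) \<ge> 0" by simp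
    ultimately show "norm (p k * expectation (\<lambda>\<omega>. \<bar>c * (\<Sum>j<k. X j \<omega>) - 1\<bar>))
        \<le> p k * expectation (\<lambda>\<omega>. (c * (\<Sum>j<k. X j \<omega>) - 1)\<^sup>2) + p k"
      using pk mult_left_mono[OF \<open>expectation (\<lambda>\<omega>. \<bar>c * (\<Sum>j<k. X j \<omega>) - 1\<bar>) \<le> expectation (\<lambda>\<omega>. (c * (\<Sum>j<k. X j \<omega>) - 1)\<^sup>2) + 1\<close> pk]
      by (simp add: abs_mult distrib_left)
  qed
  have gm1: "(\<lambda>x. c * x - 1) \<in> borel_measurable borel" by measurable
  have gm2: "(\<lambda>x. (c * x - 1)\<^sup>2) \<in> borel_measurable borel" by measurable
  note C1 = cond_sum[of "\<lambda>x. c * x - 1", OF gm1 int1 summ1[unfolded p_def]]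
  note C2 = cond_sum[of "\<lambda>x. (c * x - 1)\<^sup>2", OF gm2 int2 summ2[unfolded p_def]]
  show "integrable M (\<lambda>\<omega>. c * (\<Sum>j<N \<omega>. X j \<omega>) - 1)" using C1(1) by simp
  show "integrable M (\<lambda>\<omega>. (c * (\<Sum>j<N \<omega>. X j \<omega>) - 1)\<^sup>2)" using C2(1) by simp
  have "expectation (\<lambda>\<omega>. c * (\<Sum>j<N \<omega>. X j \<omega>) - 1) = c * a * lam - 1"
    using sums_unique2[OF C1(2)[folded p_def] sums1] .
  then show "expectation (\<lambda>\<omega>. c * (\<Sum>j<N \<omega>. X j \<omega>) - 1) = 0"
    using anz lpos by (simp add: c_def a_def)
  have v: "variance (X 0) = m2 - a\<^sup>2"
    using variance_eq[OF int0 sq_int] by (simp add: m2_def a_def)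
  have "expectation (\<lambda>\<omega>. (c * (\<Sum>j<N \<omega>. X j \<omega>) - 1)\<^sup>2)
      = (c\<^sup>2 * a\<^sup>2) * (lam\<^sup>2 + lam) + (c\<^sup>2 * (m2 - a\<^sup>2) - 2 * c * a) * lam + 1"
    using sums_unique2[OF C2(2)[folded p_def] sums2] .
  also have "\<dots> = m2 / (lam * a\<^sup>2)"
    using anz lpos by (simp add: c_def a_def field_simps power2_eq_square)
  finally show "expectation (\<lambda>\<omega>. (c * (\<Sum>j<N \<omega>. X j \<omega>) - 1)\<^sup>2)
           = ((expectation (X 0))\<^sup>2 + variance (X 0)) / (lam * (expectation (X 0))\<^sup>2)"
    by (simp add: v a_def)
qed

end

theorem lemma5:
  fixes M :: "'a measure" and X :: "nat \<Rightarrow> 'a \<Rightarrow> real" and N :: "'a \<Rightarrow> nat"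
    and lam s :: real
  assumes "prob_space M"
    and indep: "prob_space.indep_vars M (\<lambda>_. borel)
          (\<lambda>i. case i of None \<Rightarrow> (\<lambda>\<omega>. real (N \<omega>)) | Some j \<Rightarrow> X j) UNIV"
    and ident: "\<And>i. distr M borel (X i) = distr M borel (X 0)"
    and sq_int: "integrable M (\<lambda>\<omega>. (X 0 \<omega>)\<^sup>2)"
    and a_nz: "prob_space.expectation M (X 0) \<noteq> 0"
    and lam_pos: "lam > 0"
    and N_meas: "N \<in> measurable M (count_space UNIV)"
    and poisson: "\<And>k. measure M {\<omega> \<in> space M. N \<omega> = k} = exp (- lam) * lam ^ k / fact k"
    and s_ge: "1 \<le> s" and s_le: "s \<le> 2"
  shows "zolotarev s M
           (\<lambda>\<omega>. (1 / (prob_space.expectation M (X 0) * lam)) * (\<Sum>j<N \<omega>. X j \<omega>))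
           (\<lambda>_. 1)
         \<le> ereal (Gamma (1 + zol_alpha s) / Gamma (1 + s) *
             (((prob_space.expectation M (X 0))\<^sup>2 + prob_space.variance M (X 0))
               / (lam * (prob_space.expectation M (X 0))\<^sup>2)) powr (s / 2))"
  proof -
  interpret cp M X N lam
    by (rule cp.intro[OF assms(1)], unfold_locales) (use indep ident sq_int poisson in auto)
  define c where "c = 1 / (expectation (X 0) * lam)"
  define S where "S \<omega> = c * (\<Sum>j<N \<omega>. X j \<omega>)" for \<omega>
  define V where "V = ((expectation (X 0))\<^sup>2 + variance (X 0)) / (lam * (expectation (X 0))\<^sup>2)"
  note SM = S_moments[OF a_nz lam_pos, folded c_def, folded S_def]
  have intY: "integrable M (\<lambda>\<omega>. S \<omega> - 1)" using SM(1) by simp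
  have EY: "expectation (\<lambda>\<omega>. S \<omega> - 1) = 0" using SM(2) by simp
  have intY2: "integrable M (\<lambda>\<omega>. (S \<omega> - 1)\<^sup>2)" using SM(3) by simp
  have EY2: "expectation (\<lambda>\<omega>. (S \<omega> - 1)\<^sup>2) = V" using SM(4) by (simp add: V_def)
  have Vpos: "V > 0"
    using a_nz lam_pos variance_positive[of "X 0"] by (simp add: V_def add_pos_nonneg)
  have Ym[measurable]: "(\<lambda>\<omega>. S \<omega> - 1) \<in> borel_measurable M" using intY by auto
  have Sm[measurable]: "S \<in> borel_measurable M"
  proof -
    have "(\<lambda>\<omega>. (S \<omega> - 1) + 1) \<in> borel_measurable M" by measurable
    then show ?thesis by simp
  qed
  have s0: "0 < s" using s_ge by simp
  note MB = moment_bound[OF assms(1) Ym intY2 _ s0 s_le, unfolded EY2, OF Vpos]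
  have main: "\<bar>expectation (\<lambda>\<omega>. f (S \<omega>)) - expectation (\<lambda>\<omega>. f 1)\<bar>
      \<le> Gamma (1 + zol_alpha s) / Gamma (1 + s) * V powr (s / 2)" if f: "f \<in> zol_class s" for f
  proof -
    from f have bd: "bounded (range f)"
      and dif: "\<And>k x. k < zol_m s \<Longrightarrow> ((deriv ^^ k) f) differentiable (at x)"
      and hol: "\<And>x y. \<bar>(deriv ^^ zol_m s) f x - (deriv ^^ zol_m s) f y\<bar> \<le> \<bar>x - y\<bar> powr zol_alpha s"
      unfolding zol_class_def by auto
    obtain B where B: "\<And>x. \<bar>f x\<bar> \<le> B" using bd unfolding bounded_iff by auto
    have E1: "expectation (\<lambda>\<omega>. f 1) = f 1" by (simp add: prob_space)
    consider "s = 1" | "1 < s" using s_ge by linarith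
    then show ?thesis
    proof cases
      case 1
      have m0: "zol_m s = 0" using 1 by (simp add: zol_m_def)
      have a1: "zol_alpha s = 1" using 1 by (simp add: zol_alpha_def zol_m_def)
      have lip: "\<And>x y. \<bar>f x - f y\<bar> \<le> \<bar>x - y\<bar>" using hol by (simp add: m0 a1)
      have "1-lipschitz_on UNIV f"
        by (rule lipschitz_onI) (auto simp: dist_real_def lip)
      then have "continuous_on UNIV f" by (rule lipschitz_on_continuous_on)
      then have fm[measurable]: "f \<in> borel_measurable borel" by (rule borel_measurable_continuous_onI)
      have intf: "integrable M (\<lambda>\<omega>. f (S \<omega>))"
        by (rule integrable_const_bound[where B=B]) (auto simp: B)
      have "\<bar>expectation (\<lambda>\<omega>. f (S \<omega>)) - expectation (\<lambda>\<omega>. f 1)\<bar> = \<bar>expectation (\<lambda>\<omega>. f (S \<omega>) - f 1)\<bar>"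
        using intf by (simp add: prob_space)
      also have "\<dots> \<le> expectation (\<lambda>\<omega>. \<bar>f (S \<omega>) - f 1\<bar>)"
        using integral_norm_bound[of M "\<lambda>\<omega>. f (S \<omega>) - f 1"] by simp
      also have "\<dots> \<le> expectation (\<lambda>\<omega>. \<bar>S \<omega> - 1\<bar> powr s)"
        using intf MB(1) lip by (intro integral_mono) (auto simp: 1)
      also have "\<dots> \<le> V powr (s / 2)" by (rule MB(2))
      finally have fin: "\<bar>expectation (\<lambda>\<omega>. f (S \<omega>)) - expectation (\<lambda>\<omega>. f 1)\<bar> \<le> V powr (s / 2)" .
      have "Gamma (2 :: real) > 0" by (rule Gamma_real_pos) simp
      then have "Gamma (2 :: real) \<noteq> 0" by (rule less_imp_neq[symmetric])
      moreover have za: "zol_alpha 1 = 1" by (simp add: zol_alpha_def zol_m_def)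
      ultimately have g2: "Gamma (1 + zol_alpha s) / Gamma (1 + s) = 1" by (simp add: 1)
      show ?thesis using fin g2 by simp
    next
      case 2
      have "\<lceil>s\<rceil> = 2" using 2 s_le by (simp add: ceiling_eq_iff)
      then have m1: "zol_m s = 1" by (simp add: zol_m_def)
      have a1: "zol_alpha s = s - 1" by (simp add: zol_alpha_def m1)
      have difs: "\<And>x. f differentiable (at x)" using dif[of 0] by (simp add: m1)
      have hol1: "\<And>x y. \<bar>deriv f x - deriv f y\<bar> \<le> \<bar>x - y\<bar> powr (s - 1)" using hol by (simp add: m1 a1)
      have tay: "\<bar>f x - f 1 - deriv f 1 * (x - 1)\<bar> \<le> \<bar>x - 1\<bar> powr s / s" for x
        using taylor_holder[OF difs hol1, of x 1] 2 by simp
      have "continuous_on UNIV f"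
        using difs by (meson continuous_at_imp_continuous_on differentiable_imp_continuous_within)
      then have fm[measurable]: "f \<in> borel_measurable borel" by (rule borel_measurable_continuous_onI)
      have intf: "integrable M (\<lambda>\<omega>. f (S \<omega>))"
        by (rule integrable_const_bound[where B=B]) (auto simp: B)
      have intR: "integrable M (\<lambda>\<omega>. f (S \<omega>) - f 1 - deriv f 1 * (S \<omega> - 1))"
        using intf intY by auto
      have "expectation (\<lambda>\<omega>. f (S \<omega>) - f 1 - deriv f 1 * (S \<omega> - 1))
          = expectation (\<lambda>\<omega>. f (S \<omega>)) - f 1 - deriv f 1 * expectation (\<lambda>\<omega>. S \<omega> - 1)"
        using intf intY by (simp add: prob_space)
      then have "\<bar>expectation (\<lambda>\<omega>. f (S \<omega>)) - expectation (\<lambda>\<omega>. f 1)\<bar>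
          = \<bar>expectation (\<lambda>\<omega>. f (S \<omega>) - f 1 - deriv f 1 * (S \<omega> - 1))\<bar>"
        using EY by (simp add: prob_space)
      also have "\<dots> \<le> expectation (\<lambda>\<omega>. \<bar>f (S \<omega>) - f 1 - deriv f 1 * (S \<omega> - 1)\<bar>)"
        using integral_norm_bound[of M "\<lambda>\<omega>. f (S \<omega>) - f 1 - deriv f 1 * (S \<omega> - 1)"] by simp
      also have "\<dots> \<le> expectation (\<lambda>\<omega>. \<bar>S \<omega> - 1\<bar> powr s / s)"
        using intR MB(1) tay by (intro integral_mono) auto
      also have "\<dots> = expectation (\<lambda>\<omega>. \<bar>S \<omega> - 1\<bar> powr s) / s" by simp
      also have "\<dots> \<le> V powr (s / 2) / s" using MB(2) s0 by (simp add: divide_right_mono)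
      also have "\<dots> = Gamma (1 + zol_alpha s) / Gamma (1 + s) * V powr (s / 2)"
      proof -
        have "Gamma (s + 1) = s * Gamma s"
          by (rule Gamma_plus1) (use s0 in \<open>auto simp: nonpos_Ints_def\<close>)
        moreover have "Gamma s > 0" using s0 by simp
        then have "Gamma s \<noteq> 0" by (rule less_imp_neq[symmetric])
        ultimately show ?thesis using s0 by (simp add: a1 add.commute)
      qed
      finally show ?thesis .
    qed
  qed
  show ?thesis
    unfolding zolotarev_def
  proof (rule SUP_least)
    fix f assume "f \<in> zol_class s"
    from main[OF this] show "ereal \<bar>expectation (\<lambda>\<omega>. f (1 / (expectation (X 0) * lam) * (\<Sum>j<N \<omega>. X j \<omega>)))
        - expectation (\<lambda>\<omega>. f 1)\<bar>
      \<le> ereal (Gamma (1 + zol_alpha s) / Gamma (1 + s) *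
             (((expectation (X 0))\<^sup>2 + variance (X 0)) / (lam * (expectation (X 0))\<^sup>2)) powr (s / 2))"
      by (simp add: S_def c_def V_def)
  qed
qed

end
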